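(* Let $(Y_n)$ satisfy Condition 1 with constant $\alpha$ and fix an integer $a\ge1$. For $i=1,\dots,a$ let $\pi_i(n)$ be the probability that the leader election process started with $n$ players and stopped as soon as at most $a$ players remain ends with exactly $i$ players. Then there are continuous, locally Lipschitz functions $\psi_i$ on $(0,\infty)$ with $\psi_i(\alpha t)=\psi_i(t)$ for all $t>0$, such that $\pi_i(n)=\psi_i(n)+o(1)$ as $n\to\infty$, for $i=1,\dots,a$.
   Context: Condition 1: $(Y_n)_{n\ge1}$ is a sequence of random variables with $1\le Y_n\le n$ for all $n$ and $\Pr(Y_n=n)<1$ for $n\ge2$, such that: (i) $\Pr(Y_n\le k)\ge\Pr(Y_{n+1}\le k)$ for all $n,k\ge1$; (ii) there are constants $\alpha\in(0,1)$, $\varepsilon>0$ and $\delta_n=O((\log n)^{-1-\varepsilon})$ with $\mathbb E Y_{n+1}-\mathbb E Y_n=\alpha+O(\delta_n)$; (iii) $\Pr(|Y_n-\alpha n|>\delta_n n)=O(n^{-2-\varepsilon})$. Leader election process: $N_0=n$ and $(N_k)$ is the Markov chain on $\{1,2,\dots\}$ with $\Pr(N_{k+1}=j\mid N_k=i)=\Pr(Y_i=j)$; the stopped process ends at the first $k$ with $N_k\le a$, with $N_k$ players. *)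

theory Defs
  imports "HOL-Probability.Probability" "HOL-Library.Landau_Symbols"
begin

definition le_step :: "(nat \<Rightarrow> nat pmf) \<Rightarrow> nat \<Rightarrow> nat \<Rightarrow> nat pmf" where
  "le_step Y a m = (if m \<le> a then return_pmf m else Y m)"

definition le_dist :: "(nat \<Rightarrow> nat pmf) \<Rightarrow> nat \<Rightarrow> nat \<Rightarrow> nat \<Rightarrow> nat pmf" where
  "le_dist Y a n k = ((\<lambda>p. bind_pmf p (le_step Y a)) ^^ k) (return_pmf n)"

text \<open>The events "stopped at i by time k"
  increase in k, so this is the limit of their probabilities.\<close>
definition le_end_prob :: "(nat \<Rightarrow> nat pmf) \<Rightarrow> nat \<Rightarrow> nat \<Rightarrow> nat \<Rightarrow> real" where
  "le_end_prob Y a i n = lim (\<lambda>k. pmf (le_dist Y a n k) i)"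

definition condition1 :: "(nat \<Rightarrow> nat pmf) \<Rightarrow> real \<Rightarrow> bool" where
  "condition1 Y \<alpha> \<longleftrightarrow>
     (\<forall>n\<ge>1. set_pmf (Y n) \<subseteq> {1..n}) \<and>
     (\<forall>n\<ge>2. pmf (Y n) n < 1) \<and>
     (\<forall>n\<ge>1. \<forall>k\<ge>1. measure_pmf.prob (Y n) {..k} \<ge> measure_pmf.prob (Y (n+1)) {..k}) \<and>
     0 < \<alpha> \<and> \<alpha> < 1 \<and>
     (\<exists>\<epsilon>::real. \<exists>\<delta>::nat \<Rightarrow> real. \<epsilon> > 0 \<and>
        \<delta> \<in> O(\<lambda>n. ln (real n) powr (-1 - \<epsilon>)) \<and>
        (\<lambda>n. measure_pmf.expectation (Y (n+1)) real - measure_pmf.expectation (Y n) real - \<alpha>)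
           \<in> O(\<delta>) \<and>
        (\<lambda>n. measure_pmf.prob (Y n) {j. \<bar>real j - \<alpha> * real n\<bar> > \<delta> n * real n})
           \<in> O(\<lambda>n. real n powr (-2 - \<epsilon>)))"

end

theory Submission
  imports Defs "HOL-Real_Asymp.Real_Asymp"
begin



lemma iter_bind:
  fixes p :: "nat pmf" and g :: "nat \<Rightarrow> nat pmf"
  shows "((\<lambda>p. bind_pmf p g) ^^ k) p = bind_pmf p (\<lambda>j. ((\<lambda>p. bind_pmf p g) ^^ k) (return_pmf j))"
proof (induction k arbitrary: p)
  case 0 show ?case by simp (rule bind_return_pmf'[symmetric])
next
  case (Suc k)
  have "((\<lambda>p. bind_pmf p g) ^^ Suc k) p = bind_pmf (((\<lambda>p. bind_pmf p g) ^^ k) p) g" by simp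
  also have "\<dots> = bind_pmf p (\<lambda>j. bind_pmf (((\<lambda>p. bind_pmf p g) ^^ k) (return_pmf j)) g)"
    by (subst Suc) (simp add: bind_assoc_pmf)
  finally show ?case by simp
qed

lemma le_dist_Suc_first:
  assumes "a < n"
  shows "le_dist Y a n (Suc k) = bind_pmf (Y n) (\<lambda>j. le_dist Y a j k)"
proof -
  have "le_dist Y a n (Suc k) = ((\<lambda>p. bind_pmf p (le_step Y a)) ^^ k) (bind_pmf (return_pmf n) (le_step Y a))"
    unfolding le_dist_def by (simp only: funpow_Suc_right o_def)
  also have "\<dots> = ((\<lambda>p. bind_pmf p (le_step Y a)) ^^ k) (Y n)"
    using assms by (simp add: bind_return_pmf le_step_def)
  also have "\<dots> = bind_pmf (Y n) (\<lambda>j. le_dist Y a j k)"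
    by (subst iter_bind) (simp add: le_dist_def)
  finally show ?thesis .
qed

lemma le_dist_small:
  assumes "n \<le> a" shows "le_dist Y a n k = return_pmf n"
proof (induction k)
  case 0 then show ?case by (simp add: le_dist_def)
next
  case (Suc k) then show ?case using assms
    by (simp add: le_dist_def bind_return_pmf le_step_def)
qed

lemma le_dist_Suc_last: "le_dist Y a n (Suc k) = bind_pmf (le_dist Y a n k) (le_step Y a)"
  by (simp add: le_dist_def)

lemma le_dist_mono:
  assumes "i \<le> a"
  shows "pmf (le_dist Y a n k) i \<le> pmf (le_dist Y a n (Suc k)) i"
proof -
  let ?p = "le_dist Y a n k"
  have "pmf (le_dist Y a n (Suc k)) i = measure_pmf.expectation ?p (\<lambda>m. pmf (le_step Y a m) i)"
    by (simp add: le_dist_Suc_last pmf_bind)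
  also have "\<dots> \<ge> measure_pmf.expectation ?p (\<lambda>m. indicator {i} m * pmf (le_step Y a i) i)"
    by (intro integral_mono measure_pmf.integrable_const_bound[where B=1])
       (auto simp: indicator_def pmf_le_1)
  moreover have "measure_pmf.expectation ?p (\<lambda>m. indicator {i} m * pmf (le_step Y a i) i) = pmf ?p i"
    using assms by (simp add: le_step_def measure_pmf_single)
  ultimately show ?thesis by simp
qed

lemma le_end_prob_lim:
  assumes "i \<le> a"
  shows "(\<lambda>k. pmf (le_dist Y a n k) i) \<longlonglongrightarrow> le_end_prob Y a i n"
proof -
  have "incseq (\<lambda>k. pmf (le_dist Y a n k) i)"
    by (rule incseq_SucI) (use le_dist_mono[OF assms] in auto)
  moreover have "\<forall>k. \<bar>pmf (le_dist Y a n k) i\<bar> \<le> 1" by (simp add: pmf_le_1)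
  moreover have "Bseq (\<lambda>k. pmf (le_dist Y a n k) i)"
    using \<open>\<forall>k. \<bar>pmf (le_dist Y a n k) i\<bar> \<le> 1\<close> by (intro BseqI'[where K=1]) auto
  ultimately have "convergent (\<lambda>k. pmf (le_dist Y a n k) i)"
    by (intro Bseq_monoseq_convergent) (auto simp: monoseq_def incseq_def)
  then show ?thesis unfolding le_end_prob_def by (simp add: convergent_LIMSEQ_iff)
qed

lemma le_end_prob_bounds:
  assumes "i \<le> a" shows "0 \<le> le_end_prob Y a i n" "le_end_prob Y a i n \<le> 1"
proof -
  note L = le_end_prob_lim[OF assms, of Y n]
  show "0 \<le> le_end_prob Y a i n" by (rule LIMSEQ_le_const[OF L]) auto
  show "le_end_prob Y a i n \<le> 1" by (rule LIMSEQ_le_const2[OF L]) (auto simp: pmf_le_1)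
qed

lemma le_end_prob_small:
  assumes "i \<le> a" "n \<le> a" shows "le_end_prob Y a i n = (if n = i then 1 else 0)"
proof -
  have "(\<lambda>k. pmf (le_dist Y a n k) i) \<longlonglongrightarrow> (if n = i then 1 else 0)"
    using assms by (simp add: le_dist_small)
  from LIMSEQ_unique[OF le_end_prob_lim[OF assms(1)] this] show ?thesis .
qed

lemma le_end_prob_rec:
  assumes "i \<le> a" "a < n" "set_pmf (Y n) \<subseteq> {1..n}"
  shows "le_end_prob Y a i n = measure_pmf.expectation (Y n) (\<lambda>j. le_end_prob Y a i j)"
proof -
  have eq: "pmf (le_dist Y a n (Suc k)) i = (\<Sum>j\<in>{1..n}. pmf (le_dist Y a j k) i * pmf (Y n) j)" for k
    using assms by (simp add: le_dist_Suc_first pmf_bind integral_measure_pmf_real[where A="{1..n}"] subset_iff)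
  have "(\<lambda>k. pmf (le_dist Y a n (Suc k)) i) \<longlonglongrightarrow> (\<Sum>j\<in>{1..n}. le_end_prob Y a i j * pmf (Y n) j)"
    unfolding eq by (intro tendsto_intros le_end_prob_lim assms)
  moreover have "(\<lambda>k. pmf (le_dist Y a n (Suc k)) i) \<longlonglongrightarrow> le_end_prob Y a i n"
    using le_end_prob_lim[OF assms(1)] by (rule LIMSEQ_Suc)
  ultimately have "le_end_prob Y a i n = (\<Sum>j\<in>{1..n}. le_end_prob Y a i j * pmf (Y n) j)"
    using LIMSEQ_unique by blast
  also have "\<dots> = measure_pmf.expectation (Y n) (\<lambda>j. le_end_prob Y a i j)"
    using assms by (subst integral_measure_pmf_real[where A="{1..n}"]) auto
  finally show ?thesis .
qed

lemma abel_pmf: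
  fixes p :: "nat pmf" and f :: "nat \<Rightarrow> real"
  assumes "set_pmf p \<subseteq> {1..N}"
  shows "measure_pmf.expectation p f = f N - (\<Sum>l=1..<N. measure_pmf.prob p {..l} * (f (Suc l) - f l))"
proof -
  have E: "measure_pmf.expectation p f = (\<Sum>j\<in>{1..N}. f j * pmf p j)"
    using assms by (subst integral_measure_pmf_real[where A="{1..N}"]) auto
  have P: "measure_pmf.prob p {..l} = (\<Sum>j\<in>{1..N}. indicator {..l} j * pmf p j)" for l
  proof -
    have "measure_pmf.prob p {..l} = measure_pmf.expectation p (indicator {..l})" by simp
    also have "\<dots> = (\<Sum>j\<in>{1..N}. indicator {..l} j * pmf p j)"
      using assms by (subst integral_measure_pmf_real[where A="{1..N}"]) auto
    finally show ?thesis .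
  qed
  have one: "(\<Sum>j\<in>{1..N}. pmf p j) = 1"
  proof -
    have "(\<Sum>j\<in>{1..N}. pmf p j) = measure_pmf.prob p {1..N}"
      by (simp add: measure_measure_pmf_finite)
    also have "\<dots> = 1" using assms by (simp add: measure_pmf.prob_eq_1 AE_measure_pmf_iff subset_iff)
    finally show ?thesis .
  qed
  have "(\<Sum>l=1..<N. measure_pmf.prob p {..l} * (f (Suc l) - f l))
      = (\<Sum>l=1..<N. \<Sum>j\<in>{1..N}. indicator {..l} j * pmf p j * (f (Suc l) - f l))"
    by (simp only: P sum_distrib_right)
  also have "\<dots> = (\<Sum>j\<in>{1..N}. \<Sum>l=1..<N. indicator {..l} j * pmf p j * (f (Suc l) - f l))"
    by (rule sum.swap)
  also have "\<dots> = (\<Sum>j\<in>{1..N}. pmf p j * (\<Sum>l=j..<N. (f (Suc l) - f l)))"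
  proof (rule sum.cong[OF refl])
    fix j assume j: "j \<in> {1..N}"
    have "(\<Sum>l=1..<N. indicator {..l} j * pmf p j * (f (Suc l) - f l))
        = (\<Sum>l\<in>{l\<in>{1..<N}. j \<le> l}. pmf p j * (f (Suc l) - f l))"
      unfolding sum.inter_filter[OF finite_atLeastLessThan] by (intro sum.cong) (auto simp: indicator_def)
    also have "{l\<in>{1..<N}. j \<le> l} = {j..<N}" using j by auto
    finally show "(\<Sum>l=1..<N. indicator {..l} j * pmf p j * (f (Suc l) - f l))
        = pmf p j * (\<Sum>l=j..<N. (f (Suc l) - f l))" by (simp add: sum_distrib_left)
  qed
  also have "\<dots> = (\<Sum>j\<in>{1..N}. pmf p j * (f N - f j))"
    by (rule sum.cong[OF refl]) (subst sum_Suc_diff', auto)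
  also have "\<dots> = f N * (\<Sum>j\<in>{1..N}. pmf p j) - (\<Sum>j\<in>{1..N}. f j * pmf p j)"
    by (simp add: algebra_simps sum_subtractf sum_distrib_left)
  finally show ?thesis using E one by simp
qed




lemma powr_diff_bound:
  fixes u L e :: real
  assumes "0 < u" "0 < L" "0 < e"
  shows "e * L * (u + L) powr (-1-e) \<le> u powr (-e) - (u + L) powr (-e)"
proof -
  have "\<exists>z>u. z < u + L \<and> (u+L) powr (-e) - u powr (-e) = ((u+L) - u) * ((-e) * z powr (-e - 1))"
    apply (rule MVT2)
    using assms apply simp
    subgoal for x using has_real_derivative_powr[of x "-e"] assms by simp
    done
  then obtain z where z: "u < z" "z < u + L"
    and eq: "(u+L) powr (-e) - u powr (-e) = L * ((-e) * z powr (-e - 1))" by auto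
  have "(u + L) powr (-1-e) \<le> z powr (-1-e)"
    using z assms by (intro powr_mono2') auto
  then have "e * L * (u + L) powr (-1-e) \<le> e * L * z powr (-1-e)"
    using assms by (intro mult_left_mono) auto
  also have "\<dots> = u powr (-e) - (u + L) powr (-e)"
  proof -
    have m: "-e - 1 = -1 - e" by simp
    show ?thesis using eq unfolding m by (simp add: algebra_simps)
  qed
  finally show ?thesis .
qed

lemma pow_div_large:
  fixes \<alpha> t B :: real
  assumes "0 < \<alpha>" "\<alpha> < 1" "0 < t"
  shows "eventually (\<lambda>k. B \<le> t / \<alpha> ^ k) sequentially"
proof -
  have "(\<lambda>k. \<alpha> ^ k) \<longlonglongrightarrow> 0" using assms by (intro LIMSEQ_realpow_zero) auto
  moreover have "0 < t / (\<bar>B\<bar> + 1)" using assms by auto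
  ultimately have "eventually (\<lambda>k. \<alpha> ^ k < t / (\<bar>B\<bar> + 1)) sequentially"
    by (rule order_tendstoD)
  then show ?thesis
  proof (rule eventually_mono)
    fix k assume h: "\<alpha> ^ k < t / (\<bar>B\<bar> + 1)"
    have pos: "0 < \<alpha> ^ k" using assms by auto
    from h have "\<alpha> ^ k * (\<bar>B\<bar> + 1) < t" by (simp add: field_simps)
    then have "\<bar>B\<bar> + 1 < t / \<alpha> ^ k" using pos by (simp add: field_simps)
    then show "B \<le> t / \<alpha> ^ k" by linarith
  qed
qed

lemma psi_exists:
  fixes f :: "nat \<Rightarrow> real" and \<alpha> e K X H :: real and N1 :: nat
  assumes \<alpha>: "0 < \<alpha>" "\<alpha> < 1" and e: "0 < e" and K: "0 \<le> K" and X: "0 < X" and H: "0 \<le> H"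
  and Lip: "\<And>j m. X \<le> real j \<Longrightarrow> X \<le> real m \<Longrightarrow>
              \<bar>f j - f m\<bar> \<le> K * \<bar>real j - real m\<bar> / min (real j) (real m)"
  and S: "\<And>n m. N1 \<le> n \<Longrightarrow> \<bar>real m - \<alpha> * real n\<bar> \<le> 2 \<Longrightarrow>
              \<bar>f n - f m\<bar> \<le> H * ln (real n) powr (-1-e)"
  shows "\<exists>\<psi> :: real \<Rightarrow> real.
           continuous_on {0<..} \<psi> \<and>
           (\<forall>x>0. \<exists>r>0. \<exists>L. L-lipschitz_on (ball x r \<inter> {0<..}) \<psi>) \<and>
           (\<forall>t>0. \<psi> (\<alpha> * t) = \<psi> t) \<and>
           (\<lambda>n. f n - \<psi> (real n)) \<longlonglongrightarrow> 0"
proof -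
  define xs where "xs t k = t / \<alpha> ^ k" for t :: real and k :: nat
  define ns where "ns t k = nat \<lfloor>xs t k\<rfloor>" for t :: real and k :: nat
  define L where "L = - ln \<alpha>"
  define G where "G x = H / (e * L) * ln (x / 2) powr (-e)" for x :: real
  define Z where "Z = max 4 (real N1 + 1)"
  have L: "0 < L" using \<alpha> by (simp add: L_def)
  have Z4: "4 \<le> Z" and ZN: "real N1 + 1 \<le> Z" by (auto simp: Z_def)
  have xs_Suc: "xs t (Suc k) = xs t k / \<alpha>" for t k by (simp add: xs_def field_simps)
  have xs_pos: "t > 0 \<Longrightarrow> xs t k > 0" for t k using \<alpha> by (simp add: xs_def)
  have xs_mono: "t > 0 \<Longrightarrow> xs t k \<le> xs t (Suc k)" for t k
    using xs_pos[of t k] \<alpha> by (simp add: xs_Suc field_simps)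
  have xs_mono': "t > 0 \<Longrightarrow> xs t k \<le> xs t (k + j)" for t k j
    by (induction j) (auto intro: order_trans xs_mono)
  have ns_le: "t > 0 \<Longrightarrow> real (ns t k) \<le> xs t k" for t k
    using xs_pos[of t k] by (simp add: ns_def)
  have ns_gt: "t > 0 \<Longrightarrow> xs t k < real (ns t k) + 1" for t k
    using xs_pos[of t k] by (simp add: ns_def)
  have G_nonneg: "x \<ge> Z \<Longrightarrow> G x \<ge> 0" for x
    using H e L by (auto simp: G_def intro!: mult_nonneg_nonneg divide_nonneg_nonneg)
  have step: "\<bar>f (ns t (Suc k)) - f (ns t k)\<bar> \<le> G (xs t k) - G (xs t (Suc k))"
    if t: "t > 0" and xZ: "xs t k \<ge> Z" for t k
  proof -
    define x where "x = xs t k"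
    define y where "y = xs t (Suc k)"
    have y: "y = x / \<alpha>" by (simp add: x_def y_def xs_Suc)
    have xy: "x \<le> y" using xs_mono[OF t, of k] by (simp add: x_def y_def)
    have x4: "x \<ge> 4" using xZ Z4 by (simp add: x_def)
    have n'1: "real (ns t (Suc k)) \<le> y" "y < real (ns t (Suc k)) + 1"
      using ns_le[OF t] ns_gt[OF t] by (auto simp: y_def)
    have m1: "real (ns t k) \<le> x" "x < real (ns t k) + 1"
      using ns_le[OF t] ns_gt[OF t] by (auto simp: x_def)
    have N1: "N1 \<le> ns t (Suc k)"
    proof -
      have "real N1 + 1 \<le> y" using xy xZ ZN by (simp add: x_def)
      then show ?thesis using n'1 by linarith
    qed
    have ay: "\<alpha> * y = x" using \<alpha> by (simp add: y)
    have "\<bar>real (ns t k) - \<alpha> * real (ns t (Suc k))\<bar> \<le> 2"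
    proof -
      have "\<alpha> * real (ns t (Suc k)) \<le> \<alpha> * y" using n'1 \<alpha> by (intro mult_left_mono) auto
      moreover have "\<alpha> * y < \<alpha> * (real (ns t (Suc k)) + 1)" using n'1 \<alpha> by (intro mult_strict_left_mono) auto
      ultimately show ?thesis using m1 ay \<alpha> by (simp add: algebra_simps)
    qed
    from S[OF N1 this] have 1: "\<bar>f (ns t (Suc k)) - f (ns t k)\<bar> \<le> H * ln (real (ns t (Suc k))) powr (-1-e)"
      by (simp add: abs_minus_commute)
    define u where "u = ln (x / 2)"
    have u: "0 < u" using x4 by (simp add: u_def)
    have lny: "ln (y / 2) = u + L"
      using x4 \<alpha> by (simp add: u_def L_def y ln_div ln_mult)
    have "y / 2 \<le> real (ns t (Suc k))" using n'1 xy x4 by linarith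
    then have "ln (y / 2) \<le> ln (real (ns t (Suc k)))" using x4 xy by (subst ln_le_cancel_iff) auto
    then have "ln (real (ns t (Suc k))) powr (-1-e) \<le> (u + L) powr (-1-e)"
      using lny u L e by (intro powr_mono2') auto
    then have "\<bar>f (ns t (Suc k)) - f (ns t k)\<bar> \<le> H * (u + L) powr (-1-e)"
      using 1 H by (meson mult_left_mono order_trans)
    also have "\<dots> = H / (e * L) * (e * L * (u + L) powr (-1-e))" using e L by simp
    also have "\<dots> \<le> H / (e * L) * (u powr (-e) - (u + L) powr (-e))"
      using powr_diff_bound[OF u L e] H e L by (intro mult_left_mono) auto
    also have "\<dots> = G x - G y" by (simp add: G_def u_def lny algebra_simps)
    finally show ?thesis by (simp add: x_def y_def)
  qed
  have tele: "\<bar>f (ns t (q + j)) - f (ns t q)\<bar> \<le> G (xs t q) - G (xs t (q + j))"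
    if t: "t > 0" and xZ: "xs t q \<ge> Z" for t q j
  proof (induction j)
    case 0 then show ?case by simp
  next
    case (Suc j)
    have "xs t (q + j) \<ge> Z" using xZ xs_mono'[OF t, of q j] by linarith
    from step[OF t this] Suc show ?case by simp
  qed
  have ev_large: "t > 0 \<Longrightarrow> eventually (\<lambda>k. B \<le> xs t k) sequentially" for t B
    unfolding xs_def using pow_div_large[OF \<alpha>] by auto
  have G_lim: "(G \<longlongrightarrow> 0) at_top" unfolding G_def using e by real_asymp
  have conv: "(\<lambda>k. f (ns t k)) \<longlonglongrightarrow> lim (\<lambda>k. f (ns t k))" if t: "t > 0" for t
  proof -
    have "Cauchy (\<lambda>k. f (ns t k))"
    proof (rule CauchyI)
      fix r :: real assume r: "0 < r"
      from G_lim r have "eventually (\<lambda>x. G x < r / 2) at_top"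
        by (intro order_tendstoD) auto
      then obtain B where B: "\<And>x. x \<ge> B \<Longrightarrow> G x < r / 2" by (auto simp: eventually_at_top_linorder)
      have "eventually (\<lambda>k. max Z B \<le> xs t k) sequentially" by (rule ev_large[OF t])
      then obtain q where q: "\<And>k. k \<ge> q \<Longrightarrow> max Z B \<le> xs t k" by (auto simp: eventually_at_top_linorder)
      have bnd: "\<bar>f (ns t p) - f (ns t q)\<bar> < r / 2" if "p \<ge> q" for p
      proof -
        obtain j where p: "p = q + j" using \<open>p \<ge> q\<close> le_Suc_ex by blast
        have "\<bar>f (ns t p) - f (ns t q)\<bar> \<le> G (xs t q) - G (xs t p)"
          using tele[OF t, of q j] q[of q] by (simp add: p)
        moreover have "G (xs t p) \<ge> 0" using q[OF \<open>p \<ge> q\<close>] G_nonneg by auto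
        moreover have "G (xs t q) < r / 2" using q[of q] B by auto
        ultimately show ?thesis by linarith
      qed
      show "\<exists>M. \<forall>m\<ge>M. \<forall>n\<ge>M. norm (f (ns t m) - f (ns t n)) < r"
      proof (intro exI allI impI)
        fix m n assume "q \<le> m" "q \<le> n"
        from bnd[OF this(1)] bnd[OF this(2)] show "norm (f (ns t m) - f (ns t n)) < r"
          by (simp only: real_norm_def)
      qed
    qed
    then have "convergent (\<lambda>k. f (ns t k))" by (rule Cauchy_convergent)
    then show ?thesis by (simp add: convergent_LIMSEQ_iff)
  qed
  define \<psi> where "\<psi> t = lim (\<lambda>k. f (ns t k))" for t
  have lim\<psi>: "t > 0 \<Longrightarrow> (\<lambda>k. f (ns t k)) \<longlonglongrightarrow> \<psi> t" for t using conv by (simp add: \<psi>_def)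
  have bound: "\<bar>f (ns t 0) - \<psi> t\<bar> \<le> G t" if t: "t \<ge> Z" for t
  proof -
    have tp: "t > 0" using t Z4 by linarith
    have x0: "xs t 0 = t" by (simp add: xs_def)
    have "(\<lambda>j. \<bar>f (ns t j) - f (ns t 0)\<bar>) \<longlonglongrightarrow> \<bar>\<psi> t - f (ns t 0)\<bar>"
      by (intro tendsto_intros lim\<psi>[OF tp])
    moreover have "\<bar>f (ns t j) - f (ns t 0)\<bar> \<le> G t" for j
    proof -
      have "\<bar>f (ns t (0 + j)) - f (ns t 0)\<bar> \<le> G (xs t 0) - G (xs t (0 + j))"
        using tele[OF tp, of 0 j] t x0 by simp
      moreover have "G (xs t j) \<ge> 0" using xs_mono'[OF tp, of 0 j] x0 t G_nonneg by auto
      ultimately show ?thesis using x0 by simp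
    qed
    ultimately have "\<bar>\<psi> t - f (ns t 0)\<bar> \<le> G t" by (intro LIMSEQ_le_const2) auto
    then show ?thesis by (simp add: abs_minus_commute)
  qed
  have ns0: "ns (real n) 0 = n" for n by (simp add: ns_def xs_def)
  have final: "(\<lambda>n. f n - \<psi> (real n)) \<longlonglongrightarrow> 0"
  proof (rule Lim_null_comparison)
    have "eventually (\<lambda>n. Z \<le> real n) sequentially"
      by (rule filterlim_real_sequentially[unfolded filterlim_at_top, rule_format])
    then show "eventually (\<lambda>n. norm (f n - \<psi> (real n)) \<le> G (real n)) sequentially"
      by eventually_elim (use bound ns0 in fastforce)
    show "(\<lambda>n. G (real n)) \<longlonglongrightarrow> 0"
      by (rule filterlim_compose[OF G_lim filterlim_real_sequentially])
  qed
  have scale: "\<psi> (\<alpha> * t) = \<psi> t" if t: "t > 0" for t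
  proof -
    have "ns (\<alpha> * t) (Suc k) = ns t k" for k
      using \<alpha> by (simp add: ns_def xs_def)
    then have "(\<lambda>k. f (ns (\<alpha> * t) (Suc k))) \<longlonglongrightarrow> \<psi> t" using lim\<psi>[OF t] by simp
    then have "(\<lambda>k. f (ns (\<alpha> * t) k)) \<longlonglongrightarrow> \<psi> t" by (rule LIMSEQ_imp_Suc)
    then show ?thesis unfolding \<psi>_def by (rule limI)
  qed
  have lip: "\<bar>\<psi> s - \<psi> t\<bar> \<le> 2 * K / y * \<bar>s - t\<bar>" if y: "0 < y" "y \<le> s" "y \<le> t" for s t y
  proof -
    have sp: "s > 0" and tp: "t > 0" using y by auto
    have "(\<lambda>k. \<bar>f (ns s k) - f (ns t k)\<bar>) \<longlonglongrightarrow> \<bar>\<psi> s - \<psi> t\<bar>"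
      by (intro tendsto_intros lim\<psi> sp tp)
    moreover have "(\<lambda>k. 2 * K / y * \<bar>s - t\<bar> + 2 * K / y * \<alpha> ^ k) \<longlonglongrightarrow> 2 * K / y * \<bar>s - t\<bar> + 2 * K / y * 0"
      using \<alpha> by (intro tendsto_intros LIMSEQ_realpow_zero) auto
    moreover have "eventually (\<lambda>k. \<bar>f (ns s k) - f (ns t k)\<bar> \<le> 2 * K / y * \<bar>s - t\<bar> + 2 * K / y * \<alpha> ^ k) sequentially"
      using ev_large[OF sp, of "max 2 (X + 1)"] ev_large[OF tp, of "max 2 (X + 1)"]
    proof eventually_elim
      case (elim k)
      have ak: "0 < \<alpha> ^ k" using \<alpha> by simp
      have a1: "real (ns s k) \<le> xs s k" "xs s k < real (ns s k) + 1" using ns_le[OF sp] ns_gt[OF sp] by auto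
      have a2: "real (ns t k) \<le> xs t k" "xs t k < real (ns t k) + 1" using ns_le[OF tp] ns_gt[OF tp] by auto
      have X1: "X \<le> real (ns s k)" "X \<le> real (ns t k)" using elim a1 a2 by auto
      have h1: "xs s k / 2 \<le> real (ns s k)" "xs t k / 2 \<le> real (ns t k)" using elim a1 a2 by auto
      have ys: "y / \<alpha> ^ k \<le> xs s k" "y / \<alpha> ^ k \<le> xs t k"
        using y ak by (auto simp: xs_def divide_right_mono)
      have mn: "y / (2 * \<alpha> ^ k) \<le> min (real (ns s k)) (real (ns t k))" using h1 ys by auto
      have mnpos: "0 < y / (2 * \<alpha> ^ k)" using y ak by auto
      have diff: "\<bar>real (ns s k) - real (ns t k)\<bar> \<le> \<bar>s - t\<bar> / \<alpha> ^ k + 1"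
      proof -
        have "\<bar>xs s k - xs t k\<bar> = \<bar>s - t\<bar> / \<alpha> ^ k" using ak by (simp add: xs_def diff_divide_distrib[symmetric] abs_divide)
        then show ?thesis using a1 a2 by linarith
      qed
      have "\<bar>f (ns s k) - f (ns t k)\<bar> \<le> K * \<bar>real (ns s k) - real (ns t k)\<bar> / min (real (ns s k)) (real (ns t k))"
        by (rule Lip[OF X1])
      also have "\<dots> \<le> K * (\<bar>s - t\<bar> / \<alpha> ^ k + 1) / (y / (2 * \<alpha> ^ k))"
        using K mn mnpos diff by (intro frac_le mult_left_mono) auto
      also have "\<dots> = 2 * K / y * \<bar>s - t\<bar> + 2 * K / y * \<alpha> ^ k"
        using ak y \<alpha> by (simp add: field_simps)
      finally show ?case .
    qed
    ultimately show ?thesis by (intro tendsto_le[OF sequentially_bot]) auto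
  qed
  have loc: "(4 * K / x)-lipschitz_on (ball x (x / 2) \<inter> {0<..}) \<psi>" if x: "x > 0" for x
  proof (unfold lipschitz_on_def, intro conjI ballI)
    show "0 \<le> 4 * K / x" using K x by simp
    fix s t assume s: "s \<in> ball x (x / 2) \<inter> {0<..}" and t: "t \<in> ball x (x / 2) \<inter> {0<..}"
    have "\<bar>x - s\<bar> < x / 2" "\<bar>x - t\<bar> < x / 2" using s t by (auto simp: dist_real_def)
    then have "x / 2 \<le> s" "x / 2 \<le> t" by linarith+
    from lip[OF _ this] x have "\<bar>\<psi> s - \<psi> t\<bar> \<le> 2 * K / (x / 2) * \<bar>s - t\<bar>" by simp
    then show "dist (\<psi> s) (\<psi> t) \<le> 4 * K / x * dist s t" by (simp add: dist_real_def)
  qed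
  have cont: "continuous_on {0<..} \<psi>"
  proof (intro continuous_at_imp_continuous_on ballI)
    fix x :: real assume "x \<in> {0<..}"
    then have x: "x > 0" by simp
    have sub: "ball x (x / 2) \<subseteq> {0<..}"
    proof
      fix z assume "z \<in> ball x (x / 2)"
      then have "\<bar>x - z\<bar> < x / 2" by (simp add: dist_real_def)
      then have "x - z < x / 2" by (simp only: abs_less_iff)
      then show "z \<in> {0<..}" using x by simp
    qed
    have "continuous_on (ball x (x / 2)) \<psi>"
      using lipschitz_on_continuous_on[OF loc[OF x]] sub by (simp add: Int_absorb2)
    then show "isCont \<psi> x" using x by (simp add: continuous_on_eq_continuous_at)
  qed
  show ?thesis
  proof (intro exI[of _ \<psi>] conjI cont final allI impI scale)
    fix x :: real assume "x > 0"
    then show "\<exists>r>0. \<exists>L. L-lipschitz_on (ball x r \<inter> {0<..}) \<psi>"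
      using loc by (intro exI[of _ "x/2"] conjI exI[of _ "4 * K / x"]) auto
  qed
qed




lemma arith_step:
  fixes \<alpha> d n M P C T sn QQ :: real
  assumes "0 < \<alpha>" "0 \<le> d" "d \<le> \<alpha>/2" "0 < n" "1 \<le> M" "1 \<le> P" "P \<le> 2" "0 \<le> C" "0 \<le> T" "0 \<le> sn"
    "8*(C+1)*d/\<alpha> + T * sn \<le> QQ"
  shows "M*P/((\<alpha> - d)*n) * (\<alpha> + C*d) + T * sn / n \<le> M*(P + QQ)/n"
proof -
  have ad: "\<alpha> - d \<ge> \<alpha>/2" using assms by simp
  have adpos: "\<alpha> - d > 0" using assms by simp
  have sq: "4*(C+1)*d*(d/\<alpha>) \<le> 2*(C+1)*d"
  proof -
    have "d/\<alpha> \<le> 1/2" using assms by (simp add: divide_simps)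
    then have "4*(C+1)*d*(d/\<alpha>) \<le> 4*(C+1)*d*(1/2)" using assms by (intro mult_left_mono) auto
    also have "4*(C+1)*d*(1/2) = 2*(C+1)*d" by simp
    finally show ?thesis .
  qed
  have "(1 + 4*(C+1)*d/\<alpha>) * (\<alpha> - d) = \<alpha> - d + 4*(C+1)*d - 4*(C+1)*d*(d/\<alpha>)"
    using assms by (simp add: field_simps)
  also have "\<dots> \<ge> \<alpha> + C*d"
  proof -
    have e1: "4*(C+1)*d = 4*d + 4*(C*d)" "2*(C+1)*d = 2*d + 2*(C*d)" by (simp_all add: algebra_simps)
    have "0 \<le> C*d" using assms by simp
    then show ?thesis using sq assms unfolding e1 by linarith
  qed
  finally have r: "(\<alpha> + C*d)/(\<alpha> - d) \<le> 1 + 4*(C+1)*d/\<alpha>" using adpos by (simp add: divide_le_eq)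
  have "M*P*((\<alpha> + C*d)/(\<alpha> - d)) \<le> M*P*(1 + 4*(C+1)*d/\<alpha>)"
    using r assms by (intro mult_left_mono) auto
  also have "\<dots> = M*P + M*(P*(4*(C+1)*d/\<alpha>))" by (simp add: algebra_simps)
  also have "\<dots> \<le> M*P + M*(2*(4*(C+1)*d/\<alpha>))"
    using assms by (intro add_left_mono mult_left_mono mult_right_mono) auto
  also have "2*(4*(C+1)*d/\<alpha>) = 8*(C+1)*d/\<alpha>" by simp
  finally have 1: "M*P*((\<alpha> + C*d)/(\<alpha> - d)) \<le> M*P + M*(8*(C+1)*d/\<alpha>)" .
  have 2: "T * sn \<le> M*(T * sn)"
  proof -
    have "0 \<le> T * sn" using assms by simp
    then have "1 * (T * sn) \<le> M * (T * sn)" using assms by (intro mult_right_mono) auto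
    then show ?thesis by simp
  qed
  have "M*P*((\<alpha> + C*d)/(\<alpha> - d)) + T * sn \<le> M*P + M*(8*(C+1)*d/\<alpha> + T * sn)"
    using 1 2 by (simp add: algebra_simps)
  also have "\<dots> \<le> M*P + M*QQ" using assms by (intro add_left_mono mult_left_mono) auto
  also have "\<dots> = M*(P + QQ)" by (simp add: algebra_simps)
  finally have 3: "M*P*((\<alpha> + C*d)/(\<alpha> - d)) + T * sn \<le> M*(P + QQ)" .
  have "M*P/((\<alpha> - d)*n) * (\<alpha> + C*d) + T * sn / n = (M*P*((\<alpha> + C*d)/(\<alpha> - d)) + T * sn) / n"
    using assms adpos by (simp add: field_simps)
  also have "\<dots> \<le> M*(P + QQ)/n" using 3 assms by (intro divide_right_mono) auto
  finally show ?thesis .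
qed

lemma wsum:
  fixes w g :: "nat \<Rightarrow> real" and I W :: "nat set"
  assumes "finite I" "\<And>l. l \<in> I \<Longrightarrow> 0 \<le> w l" "\<And>l. l \<in> I \<Longrightarrow> \<bar>g l\<bar> \<le> 1"
    "\<And>l. l \<in> I \<Longrightarrow> l \<in> W \<Longrightarrow> \<bar>g l\<bar> \<le> b" "\<And>l. l \<in> I \<Longrightarrow> l \<notin> W \<Longrightarrow> w l \<le> t"
    "0 \<le> b" "0 \<le> t"
  shows "\<bar>\<Sum>l\<in>I. w l * g l\<bar> \<le> b * (\<Sum>l\<in>I. w l) + real (card I) * t"
proof -
  have "\<bar>\<Sum>l\<in>I. w l * g l\<bar> \<le> (\<Sum>l\<in>I. \<bar>w l * g l\<bar>)" by (rule sum_abs)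
  also have "\<dots> \<le> (\<Sum>l\<in>I. b * w l + t)"
  proof (rule sum_mono)
    fix l assume l: "l \<in> I"
    show "\<bar>w l * g l\<bar> \<le> b * w l + t"
    proof (cases "l \<in> W")
      case True
      have "\<bar>w l * g l\<bar> = w l * \<bar>g l\<bar>" using assms(2)[OF l] by (simp add: abs_mult)
      also have "\<dots> \<le> w l * b" using assms(4)[OF l True] assms(2)[OF l] by (intro mult_left_mono) auto
      finally show ?thesis using assms by (simp add: mult.commute)
    next
      case False
      have "\<bar>w l * g l\<bar> = w l * \<bar>g l\<bar>" using assms(2)[OF l] by (simp add: abs_mult)
      also have "\<dots> \<le> w l * 1" using assms(3)[OF l] assms(2)[OF l] by (intro mult_left_mono) auto
      also have "\<dots> \<le> t" using assms(5)[OF l False] by simp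
      finally show ?thesis using mult_nonneg_nonneg[OF assms(6) assms(2)[OF l]] by linarith
    qed
  qed
  also have "\<dots> = b * (\<Sum>l\<in>I. w l) + real (card I) * t"
    by (simp add: sum.distrib sum_distrib_left)
  finally show ?thesis .
qed




lemma powr_m2: "0 < (x::real) \<Longrightarrow> x * x powr (-2-e) = x powr (-e) / x"
  by (simp add: powr_add[symmetric] powr_minus field_simps power2_eq_square)

lemma diff_identity:
  fixes Y :: "nat \<Rightarrow> nat pmf" and f :: "nat \<Rightarrow> real"
  assumes "set_pmf (Y n) \<subseteq> {1..n}" "set_pmf (Y (Suc n)) \<subseteq> {1..Suc n}"
  shows "measure_pmf.expectation (Y (Suc n)) f - measure_pmf.expectation (Y n) f
    = (\<Sum>l=1..<Suc n. (measure_pmf.prob (Y n) {..l} - measure_pmf.prob (Y (Suc n)) {..l}) * (f (Suc l) - f l))"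
proof -
  have s1: "set_pmf (Y n) \<subseteq> {1..Suc n}" using assms(1) by auto
  show ?thesis
    unfolding abel_pmf[OF s1, of f] abel_pmf[OF assms(2), of f]
    by (simp add: sum_subtractf left_diff_distrib)
qed

lemma lip_step_bound:
  fixes \<pi> :: "nat \<Rightarrow> real" and X K :: real
  assumes X: "0 < X" and step: "\<And>l. X \<le> real l \<Longrightarrow> \<bar>\<pi> (Suc l) - \<pi> l\<bar> \<le> K / real l"
  shows "X \<le> real j \<Longrightarrow> \<bar>\<pi> (j + k) - \<pi> j\<bar> \<le> K * real k / real j"
proof (induction k)
  case 0 then show ?case by simp
next
  case (Suc k)
  assume Xj: "X \<le> real j"
  have jpos: "0 < real j" using X Xj by linarith
  have "\<bar>\<pi> (Suc (j + k)) - \<pi> (j + k)\<bar> \<le> K / real (j + k)" using Xj by (intro step) auto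
  also have "\<dots> \<le> K / real j"
  proof -
    have "0 \<le> K / real j" using step[OF Xj] by (meson abs_ge_zero order_trans)
    then have "0 \<le> K" using jpos by (simp add: zero_le_divide_iff)
    then show ?thesis using jpos by (intro divide_left_mono) auto
  qed
  finally have "\<bar>\<pi> (j + Suc k) - \<pi> (j + k)\<bar> \<le> K / real j" by simp
  moreover have "\<bar>\<pi> (j + k) - \<pi> j\<bar> \<le> K * real k / real j" using Suc Xj by simp
  ultimately have "\<bar>\<pi> (j + Suc k) - \<pi> j\<bar> \<le> K / real j + K * real k / real j" by linarith
  also have "\<dots> = K * real (Suc k) / real j" by (simp add: add_divide_distrib[symmetric] algebra_simps)
  finally show ?case .
qed

lemma lip_full:
  fixes \<pi> :: "nat \<Rightarrow> real" and X K :: real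
  assumes X: "0 < X" and step: "\<And>l. X \<le> real l \<Longrightarrow> \<bar>\<pi> (Suc l) - \<pi> l\<bar> \<le> K / real l"
    and j: "X \<le> real j" and m: "X \<le> real m"
  shows "\<bar>\<pi> j - \<pi> m\<bar> \<le> K * \<bar>real j - real m\<bar> / min (real j) (real m)"
proof (cases "j \<le> m")
  case True
  then obtain k where m_eq: "m = j + k" using le_Suc_ex by blast
  have "\<bar>\<pi> (j + k) - \<pi> j\<bar> \<le> K * real k / real j" by (rule lip_step_bound[OF X step j])
  then show ?thesis using True by (simp add: m_eq abs_minus_commute min_def)
next
  case False
  then obtain k where j_eq: "j = m + k" using le_Suc_ex[of m j] by auto
  have "\<bar>\<pi> (m + k) - \<pi> m\<bar> \<le> K * real k / real m" by (rule lip_step_bound[OF X step m])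
  then show ?thesis using False by (simp add: j_eq min_def)
qed




lemma ev_tendsto_le:
  fixes g :: "nat \<Rightarrow> real"
  assumes "g \<longlonglongrightarrow> 0" "0 < c"
  shows "eventually (\<lambda>n. g n \<le> c) sequentially"
  using order_tendstoD(2)[OF assms] by (rule eventually_mono) auto

lemma ev_real_ge: "eventually (\<lambda>n::nat. c \<le> real n) sequentially"
  by (rule filterlim_real_sequentially[unfolded filterlim_at_top, rule_format])

lemma lip_part:
  fixes Y :: "nat \<Rightarrow> nat pmf" and \<alpha> \<epsilon> C D T :: real and N a :: nat
    and \<pi> :: "nat \<Rightarrow> real" and \<delta> :: "nat \<Rightarrow> real"
  assumes supp: "\<And>n. 1 \<le> n \<Longrightarrow> set_pmf (Y n) \<subseteq> {1..n}"
    and mono: "\<And>n k. 1 \<le> n \<Longrightarrow> 1 \<le> k \<Longrightarrow>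
                 measure_pmf.prob (Y (n+1)) {..k} \<le> measure_pmf.prob (Y n) {..k}"
    and \<alpha>: "0 < \<alpha>" "\<alpha> < 1" and \<epsilon>: "0 < \<epsilon>" and C: "0 \<le> C" and D: "0 \<le> D" and T: "0 \<le> T"
    and B1: "\<And>n. N \<le> n \<Longrightarrow> \<bar>\<delta> n\<bar> \<le> D * ln (real n) powr (-1-\<epsilon>)"
    and B2: "\<And>n. N \<le> n \<Longrightarrow>
      \<bar>measure_pmf.expectation (Y (n+1)) real - measure_pmf.expectation (Y n) real - \<alpha>\<bar> \<le> C * \<bar>\<delta> n\<bar>"
    and B3: "\<And>n. N \<le> n \<Longrightarrow>
      measure_pmf.prob (Y n) {j. \<bar>real j - \<alpha> * real n\<bar> > \<delta> n * real n} \<le> T * real n powr (-2-\<epsilon>)"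
    and \<pi>01: "\<And>n. 0 \<le> \<pi> n \<and> \<pi> n \<le> 1"
    and rec: "\<And>n. a < n \<Longrightarrow> \<pi> n = measure_pmf.expectation (Y n) \<pi>"
  shows "\<exists>X M. 0 < X \<and> 0 \<le> M \<and> (\<forall>l. X \<le> real l \<longrightarrow> \<bar>\<pi> (Suc l) - \<pi> l\<bar> \<le> M / real l)"
proof -
  define d where "d n = \<bar>\<delta> n\<bar>" for n
  define \<beta> where "\<beta> = (1 + \<alpha>) / 2"
  define Lb where "Lb = - ln \<beta>"
  define \<phi> where "\<phi> u = u powr (-\<epsilon>)" for u :: real
  define A where "A = (8*(C+1)*D/\<alpha> + T) / (\<epsilon>*Lb) + 1"
  define F where "F n l = measure_pmf.prob (Y n) {..l}" for n l
  have \<beta>: "0 < \<beta>" "\<beta> < 1" "\<alpha> < \<beta>" using \<alpha> by (auto simp: \<beta>_def)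
  have Lb: "0 < Lb" using \<beta> by (simp add: Lb_def)
  have c0: "0 \<le> 8*(C+1)*D/\<alpha> + T" using C D T \<alpha> by simp
  have A: "0 < A"
  proof -
    have "0 \<le> (8*(C+1)*D/\<alpha> + T) / (\<epsilon>*Lb)" using c0 \<epsilon> Lb by simp
    then show ?thesis by (simp add: A_def)
  qed
  have Aeq: "8*(C+1)*D/\<alpha> + T \<le> A * (\<epsilon> * Lb)"
    using c0 \<epsilon> Lb by (simp add: A_def field_simps)
  have "((\<lambda>x. A * ln x powr (-\<epsilon>)) \<longlongrightarrow> 0) at_top" using \<epsilon> by real_asymp
  then have "eventually (\<lambda>x. A * ln x powr (-\<epsilon>) < 1) at_top" by (rule order_tendstoD) simp
  then have "eventually (\<lambda>x. A * ln x powr (-\<epsilon>) < 1 \<and> 3 \<le> x) at_top"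
    by (intro eventually_conj eventually_ge_at_top)
  then obtain X where X: "\<And>x. X \<le> x \<Longrightarrow> A * ln x powr (-\<epsilon>) < 1 \<and> 3 \<le> x"
    by (auto simp: eventually_at_top_linorder)
  have X3: "3 \<le> X" using X[of X] by simp
  have Aphi: "0 \<le> A * \<phi> (ln x)" "A * \<phi> (ln x) \<le> 1" if "X \<le> x" for x
    using X[OF that] A by (auto simp: \<phi>_def)
  have e1: "eventually (\<lambda>n. D * ln (real n) powr (-1-\<epsilon>) \<le> \<alpha>/2) sequentially"
    apply (rule ev_tendsto_le) subgoal using \<epsilon> by real_asymp subgoal using \<alpha> by simp done
  have e2: "eventually (\<lambda>n. D * ln (real n + 1) powr (-1-\<epsilon>) \<le> (1-\<alpha>)/4) sequentially"
    apply (rule ev_tendsto_le) subgoal using \<epsilon> by real_asymp subgoal using \<alpha> by simp done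
  have e3: "eventually (\<lambda>n. (\<alpha> + (1-\<alpha>)/4) * (real n + 1) \<le> \<beta> * real n) sequentially"
    using ev_real_ge[of "(\<alpha> + (1-\<alpha>)/4) / ((1-\<alpha>)/4)"]
  proof (rule eventually_mono)
    fix n assume h: "(\<alpha> + (1-\<alpha>)/4) / ((1-\<alpha>)/4) \<le> real n"
    have cpos: "0 < (1-\<alpha>)/4" using \<alpha> by simp
    have c: "\<alpha> + (1-\<alpha>)/4 \<le> real n * ((1-\<alpha>)/4)" using h pos_divide_le_eq[OF cpos] by blast
    have "(\<alpha> + (1-\<alpha>)/4) * (real n + 1) = (\<alpha> + (1-\<alpha>)/4) * real n + (\<alpha> + (1-\<alpha>)/4)"
      by (simp only: distrib_left mult_1_right)
    moreover have "\<beta> * real n = (\<alpha> + (1-\<alpha>)/4) * real n + real n * ((1-\<alpha>)/4)"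
      by (simp add: \<beta>_def field_simps)
    ultimately show "(\<alpha> + (1-\<alpha>)/4) * (real n + 1) \<le> \<beta> * real n" using c by linarith
  qed
  have e4: "eventually (\<lambda>n. X \<le> \<alpha> * real n / 2) sequentially"
    using ev_real_ge[of "2 * X / \<alpha>"] by (rule eventually_mono) (use \<alpha> in \<open>simp add: field_simps\<close>)
  have e5: "eventually (\<lambda>n::nat. real n powr (-\<epsilon>) \<le> ln (real n) powr (-1-\<epsilon>)) sequentially"
    using \<epsilon> by real_asymp
  have e6: "eventually (\<lambda>n::nat. Lb < ln (real n)) sequentially" by real_asymp
  have e7: "eventually (\<lambda>n. \<beta> * real n \<le> real n - 1) sequentially"
    using ev_real_ge[of "1 / (1 - \<beta>)"] by (rule eventually_mono) (use \<beta> in \<open>simp add: field_simps\<close>)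
  have e8: "eventually (\<lambda>n. N + a + 1 \<le> n) sequentially" by (rule eventually_ge_at_top)
  have "eventually (\<lambda>n. D * ln (real n) powr (-1-\<epsilon>) \<le> \<alpha>/2 \<and> D * ln (real n + 1) powr (-1-\<epsilon>) \<le> (1-\<alpha>)/4
      \<and> (\<alpha> + (1-\<alpha>)/4) * (real n + 1) \<le> \<beta> * real n \<and> X \<le> \<alpha> * real n / 2
      \<and> real n powr (-\<epsilon>) \<le> ln (real n) powr (-1-\<epsilon>) \<and> Lb < ln (real n)
      \<and> \<beta> * real n \<le> real n - 1 \<and> N + a + 1 \<le> n) sequentially"
    using e1 e2 e3 e4 e5 e6 e7 e8 by (intro eventually_conj)
  then obtain N0 where N0: "\<And>n. N0 \<le> n \<Longrightarrow> D * ln (real n) powr (-1-\<epsilon>) \<le> \<alpha>/2 \<and> D * ln (real n + 1) powr (-1-\<epsilon>) \<le> (1-\<alpha>)/4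
      \<and> (\<alpha> + (1-\<alpha>)/4) * (real n + 1) \<le> \<beta> * real n \<and> X \<le> \<alpha> * real n / 2
      \<and> real n powr (-\<epsilon>) \<le> ln (real n) powr (-1-\<epsilon>) \<and> Lb < ln (real n)
      \<and> \<beta> * real n \<le> real n - 1 \<and> N + a + 1 \<le> n"
    by (auto simp: eventually_at_top_linorder)
  define M where "M = real N0 + 1"
  have M1: "1 \<le> M" by (simp add: M_def)
  have claim: "X \<le> real n \<longrightarrow> \<bar>\<pi> (Suc n) - \<pi> n\<bar> \<le> M * (2 - A * \<phi> (ln (real n))) / real n" for n
  proof (induction n rule: less_induct)
    case (less n)
    show ?case
    proof
      assume Xn: "X \<le> real n"
      have npos: "0 < real n" using Xn X3 by linarith
      have d1: "\<bar>\<pi> (Suc n) - \<pi> n\<bar> \<le> 1" using \<pi>01[of n] \<pi>01[of "Suc n"] by linarith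
      show "\<bar>\<pi> (Suc n) - \<pi> n\<bar> \<le> M * (2 - A * \<phi> (ln (real n))) / real n"
      proof (cases "n < N0")
        case True
        have "1 \<le> M / real n" using True npos by (simp add: M_def field_simps)
        also have "\<dots> \<le> M * (2 - A * \<phi> (ln (real n))) / real n"
          using Aphi[OF Xn] M1 npos by (intro divide_right_mono) (auto simp: mult_le_cancel_left1)
        finally show ?thesis using d1 by linarith
      next
        case False
        then have nN0: "N0 \<le> n" by simp
        note H = N0[OF nN0]
        have nN: "N \<le> n" and na: "a < n" and n1: "1 \<le> n" using H by auto
        have dn: "d n \<le> D * ln (real n) powr (-1-\<epsilon>)" using B1[OF nN] by (simp add: d_def)
        have dn2: "d n \<le> \<alpha>/2" using dn H by linarith
        have dn0: "0 \<le> d n" by (simp add: d_def)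
        have b1S: "d (Suc n) \<le> D * ln (real n + 1) powr (-1-\<epsilon>)"
          using B1[of "Suc n"] nN unfolding of_nat_Suc d_def by (simp add: add.commute)
        have dS: "d (Suc n) \<le> (1-\<alpha>)/4" using b1S H by linarith
        have dS0: "0 \<le> d (Suc n)" by (simp add: d_def)
        define lo where "lo = (\<alpha> - d n) * real n"
        define hi where "hi = (\<alpha> + d (Suc n)) * (real n + 1)"
        have lo_ge: "\<alpha> * real n / 2 \<le> lo"
        proof -
          have "\<alpha> * real n / 2 = (\<alpha> - \<alpha>/2) * real n" by simp
          also have "\<dots> \<le> (\<alpha> - d n) * real n" using dn2 npos by (intro mult_right_mono) auto
          finally show ?thesis by (simp add: lo_def)
        qed
        have Xlo: "X \<le> lo" using lo_ge H by linarith
        have lopos: "0 < lo" using Xlo X3 by linarith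
        have hi_le: "hi \<le> \<beta> * real n"
        proof -
          have "hi \<le> (\<alpha> + (1-\<alpha>)/4) * (real n + 1)"
            unfolding hi_def using dS by (intro mult_right_mono) auto
          then show ?thesis using H by linarith
        qed
        have hi_n: "hi \<le> real n - 1" using hi_le H by linarith
        have lo_hi: "lo \<le> hi"
        proof -
          have "lo \<le> \<alpha> * real n" unfolding lo_def using dn0 npos by (simp add: algebra_simps)
          also have "\<dots> \<le> hi" unfolding hi_def using dS0 \<alpha> npos
            by (simp add: algebra_simps)
          finally show ?thesis .
        qed
        have Xhi: "X \<le> hi" using Xlo lo_hi by linarith
        have hipos: "0 < hi" using Xhi X3 by linarith
        define P where "P = 2 - A * \<phi> (ln hi)"
        have P: "1 \<le> P" "P \<le> 2" using Aphi[OF Xhi] by (auto simp: P_def)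
        define b where "b = M * P / lo"
        have b0: "0 \<le> b" using M1 P lopos by (simp add: b_def)
        define t where "t = T * real n powr (-2-\<epsilon>)"
        have t0: "0 \<le> t" using T by (simp add: t_def)
        define w where "w l = F n l - F (Suc n) l" for l
        define W where "W = {l. lo \<le> real l \<and> real l < hi}"
        have suppn: "set_pmf (Y n) \<subseteq> {1..n}" using supp n1 by simp
        have suppS: "set_pmf (Y (Suc n)) \<subseteq> {1..Suc n}" using supp[of "Suc n"] by simp
        have ident: "\<pi> (Suc n) - \<pi> n = (\<Sum>l=1..<Suc n. w l * (\<pi> (Suc l) - \<pi> l))"
          using rec[of n] rec[of "Suc n"] na diff_identity[OF suppn suppS, of \<pi>]
          by (simp add: w_def F_def)
        have sumw: "(\<Sum>l=1..<Suc n. w l) = measure_pmf.expectation (Y (n+1)) real - measure_pmf.expectation (Y n) real"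
          using diff_identity[OF suppn suppS, of real] by (simp add: w_def F_def)
        have sumw_le: "(\<Sum>l=1..<Suc n. w l) \<le> \<alpha> + C * d n"
          using B2[OF nN] unfolding sumw d_def by linarith
        have wb: "\<bar>\<Sum>l\<in>{1..<Suc n}. w l * (\<pi> (Suc l) - \<pi> l)\<bar>
                  \<le> b * (\<Sum>l\<in>{1..<Suc n}. w l) + real (card {1..<Suc n}) * t"
        proof (rule wsum[where W = W])
          fix l assume l: "l \<in> {1..<Suc n}"
          show "0 \<le> w l" using mono[of n l] l n1 by (simp add: w_def F_def)
          show "\<bar>\<pi> (Suc l) - \<pi> l\<bar> \<le> 1" using \<pi>01[of l] \<pi>01[of "Suc l"] by linarith
          show "\<bar>\<pi> (Suc l) - \<pi> l\<bar> \<le> b" if lW: "l \<in> W"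
          proof -
            have lo_l: "lo \<le> real l" and l_hi: "real l < hi" using lW by (auto simp: W_def)
            have Xl: "X \<le> real l" using Xlo lo_l by linarith
            have ln: "l < n" using l_hi hi_n by linarith
            have lpos: "0 < real l" using Xl X3 by linarith
            have IH: "\<bar>\<pi> (Suc l) - \<pi> l\<bar> \<le> M * (2 - A * \<phi> (ln (real l))) / real l"
              using less.IH[OF ln] Xl by blast
            have lnl: "0 < ln (real l)" using Xl X3 by simp
            have "ln (real l) \<le> ln hi" using l_hi lpos by simp
            then have "\<phi> (ln hi) \<le> \<phi> (ln (real l))" unfolding \<phi>_def using lnl \<epsilon>
              by (intro powr_mono2') auto
            then have "2 - A * \<phi> (ln (real l)) \<le> P" using A by (simp add: P_def mult_left_mono)
            then have "M * (2 - A * \<phi> (ln (real l))) \<le> M * P" using M1 by (intro mult_left_mono) auto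
            moreover have "0 \<le> M * P" using M1 P by simp
            ultimately have "M * (2 - A * \<phi> (ln (real l))) / real l \<le> M * P / lo"
              using lopos lo_l by (intro frac_le) auto
            then show ?thesis using IH by (simp add: b_def)
          qed
          show "w l \<le> t" if lW: "l \<notin> W"
          proof (cases "real l < lo")
            case True
            have "w l \<le> F n l" using measure_nonneg[of _ "{..l}"] by (simp add: w_def F_def)
            also have "F n l \<le> measure_pmf.prob (Y n) {j. \<bar>real j - \<alpha> * real n\<bar> > \<delta> n * real n}"
              unfolding F_def
            proof (rule measure_pmf.finite_measure_mono)
              show "{..l} \<subseteq> {j. \<bar>real j - \<alpha> * real n\<bar> > \<delta> n * real n}"
              proof
                fix j assume "j \<in> {..l}"
                then have "real j \<le> real l" by simp
                then have "real j < \<alpha> * real n - d n * real n" using True by (simp add: lo_def algebra_simps)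
                moreover have "\<delta> n * real n \<le> d n * real n" using npos by (simp add: d_def mult_right_mono)
                ultimately show "j \<in> {j. \<bar>real j - \<alpha> * real n\<bar> > \<delta> n * real n}" by simp
              qed
            qed simp
            also have "\<dots> \<le> t" using B3[OF nN] by (simp add: t_def)
            finally show ?thesis .
          next
            case False
            then have hil: "hi \<le> real l" using lW by (auto simp: W_def)
            have "w l \<le> 1 - F (Suc n) l" using measure_pmf.prob_le_1[of "Y n" "{..l}"] by (simp add: w_def F_def)
            also have "1 - F (Suc n) l = measure_pmf.prob (Y (Suc n)) (UNIV - {..l})"
              using measure_pmf.prob_compl[where M="Y (Suc n)" and A="{..l}"] by (simp add: F_def)
            also have "\<dots> \<le> measure_pmf.prob (Y (Suc n)) {j. \<bar>real j - \<alpha> * real (Suc n)\<bar> > \<delta> (Suc n) * real (Suc n)}"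
            proof (rule measure_pmf.finite_measure_mono)
              show "UNIV - {..l} \<subseteq> {j. \<bar>real j - \<alpha> * real (Suc n)\<bar> > \<delta> (Suc n) * real (Suc n)}"
              proof
                fix j assume "j \<in> UNIV - {..l}"
                then have "real l < real j" by simp
                then have "\<alpha> * real (Suc n) + d (Suc n) * real (Suc n) < real j"
                  using hil by (simp add: hi_def algebra_simps)
                moreover have "\<delta> (Suc n) * real (Suc n) \<le> d (Suc n) * real (Suc n)"
                  by (rule mult_right_mono) (auto simp: d_def)
                moreover have "real j - \<alpha> * real (Suc n) \<le> \<bar>real j - \<alpha> * real (Suc n)\<bar>" by (rule abs_ge_self)
                ultimately show "j \<in> {j. \<bar>real j - \<alpha> * real (Suc n)\<bar> > \<delta> (Suc n) * real (Suc n)}"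
                  unfolding mem_Collect_eq by linarith
              qed
            qed simp
            also have "\<dots> \<le> T * real (Suc n) powr (-2-\<epsilon>)" using B3[of "Suc n"] nN by simp
            also have "\<dots> \<le> t" unfolding t_def using npos \<epsilon> T
              by (intro mult_left_mono powr_mono2') auto
            finally show ?thesis .
          qed
        qed (use b0 t0 in auto)
        have "\<bar>\<pi> (Suc n) - \<pi> n\<bar> \<le> b * (\<alpha> + C * d n) + real n * t"
        proof -
          have "b * (\<Sum>l\<in>{1..<Suc n}. w l) \<le> b * (\<alpha> + C * d n)"
            using sumw_le b0 by (intro mult_left_mono) auto
          moreover have c: "real (card {1..<Suc n}) = real n" by simp
          ultimately show ?thesis using wb unfolding ident[symmetric] c by linarith
        qed
        also have "\<dots> = M*P/((\<alpha> - d n)*real n) * (\<alpha> + C * d n) + T * real n powr (-\<epsilon>) / real n"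
        proof -
          have "real n * t = T * (real n * real n powr (-2-\<epsilon>))" by (simp add: t_def)
          also have "\<dots> = T * real n powr (-\<epsilon>) / real n" using powr_m2[OF npos, of \<epsilon>] by simp
          finally have "real n * t = T * real n powr (-\<epsilon>) / real n" .
          moreover have "b = M*P/((\<alpha> - d n)*real n)" by (simp add: b_def lo_def)
          ultimately show ?thesis by simp
        qed
        also have "\<dots> \<le> M * (P + A * (\<phi> (ln hi) - \<phi> (ln (real n)))) / real n"
        proof (rule arith_step)
          show "0 < \<alpha>" "0 \<le> d n" "d n \<le> \<alpha>/2" "0 < real n" "1 \<le> M" "1 \<le> P" "P \<le> 2" "0 \<le> C" "0 \<le> T"
            "0 \<le> real n powr (-\<epsilon>)" using \<alpha> dn0 dn2 npos M1 P C T by auto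
          define u where "u = ln (real n) - Lb"
          have u: "0 < u" using H by (simp add: u_def)
          have lnhi: "ln hi \<le> u"
          proof -
            have "ln hi \<le> ln (\<beta> * real n)" using hi_le hipos by simp
            also have "\<dots> = u" using \<beta> npos by (simp add: ln_mult u_def Lb_def)
            finally show ?thesis .
          qed
          have lnhi0: "0 < ln hi" using Xhi X3 by simp
          have "\<phi> u \<le> \<phi> (ln hi)" unfolding \<phi>_def using lnhi lnhi0 \<epsilon> by (intro powr_mono2') auto
          moreover have "\<epsilon> * Lb * ln (real n) powr (-1-\<epsilon>) \<le> \<phi> u - \<phi> (ln (real n))"
            using powr_diff_bound[OF u Lb \<epsilon>] by (simp add: \<phi>_def u_def)
          ultimately have q1: "\<epsilon> * Lb * ln (real n) powr (-1-\<epsilon>) \<le> \<phi> (ln hi) - \<phi> (ln (real n))" by linarith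
          have lnpow0: "0 \<le> ln (real n) powr (-1-\<epsilon>)" by simp
          have "8*(C+1)*d n/\<alpha> + T * real n powr (-\<epsilon>) \<le> (8*(C+1)*D/\<alpha> + T) * ln (real n) powr (-1-\<epsilon>)"
          proof -
            have "8*(C+1)*d n/\<alpha> \<le> 8*(C+1)/\<alpha> * (D * ln (real n) powr (-1-\<epsilon>))"
              using dn C \<alpha> by (simp add: mult_left_mono divide_right_mono)
            moreover have "T * real n powr (-\<epsilon>) \<le> T * ln (real n) powr (-1-\<epsilon>)"
              using H T by (intro mult_left_mono) auto
            ultimately show ?thesis by (simp add: algebra_simps)
          qed
          also have "\<dots> \<le> A * (\<epsilon> * Lb) * ln (real n) powr (-1-\<epsilon>)"
            using Aeq lnpow0 by (intro mult_right_mono) auto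
          also have "\<dots> = A * (\<epsilon> * Lb * ln (real n) powr (-1-\<epsilon>))" by simp
          also have "\<dots> \<le> A * (\<phi> (ln hi) - \<phi> (ln (real n)))" using q1 A by (intro mult_left_mono) auto
          finally show "8*(C+1)*d n/\<alpha> + T * real n powr (-\<epsilon>) \<le> A * (\<phi> (ln hi) - \<phi> (ln (real n)))" .
        qed
        also have "P + A * (\<phi> (ln hi) - \<phi> (ln (real n))) = 2 - A * \<phi> (ln (real n))"
          by (simp add: P_def algebra_simps)
        finally show ?thesis .
      qed
    qed
  qed
  show ?thesis
  proof (intro exI conjI allI impI)
    show "0 < X" using X3 by simp
    show "0 \<le> 2 * M" using M1 by simp
    fix l assume Xl: "X \<le> real l"
    have lpos: "0 < real l" using Xl X3 by linarith
    have "\<bar>\<pi> (Suc l) - \<pi> l\<bar> \<le> M * (2 - A * \<phi> (ln (real l))) / real l" using claim Xl by blast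
    also have "\<dots> \<le> 2 * M / real l"
      using Aphi[OF Xl] M1 lpos by (intro divide_right_mono) (auto simp: mult_left_mono)
    finally show "\<bar>\<pi> (Suc l) - \<pi> l\<bar> \<le> 2 * M / real l" .
  qed
qed




lemma expc: "measure_pmf.expectation (p::nat pmf) (\<lambda>x. c) = (c::real)"
  using measure_pmf.prob_space[of p] by (simp add: lebesgue_integral_const)

lemma S_part:
  fixes Y :: "nat \<Rightarrow> nat pmf" and \<alpha> \<epsilon> D T X K :: real and N a :: nat
    and \<pi> :: "nat \<Rightarrow> real" and \<delta> :: "nat \<Rightarrow> real"
  assumes \<alpha>: "0 < \<alpha>" "\<alpha> < 1" and \<epsilon>: "0 < \<epsilon>" and D: "0 \<le> D" and T: "0 \<le> T"
    and B1: "\<And>n. N \<le> n \<Longrightarrow> \<bar>\<delta> n\<bar> \<le> D * ln (real n) powr (-1-\<epsilon>)"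
    and B3: "\<And>n. N \<le> n \<Longrightarrow>
      measure_pmf.prob (Y n) {j. \<bar>real j - \<alpha> * real n\<bar> > \<delta> n * real n} \<le> T * real n powr (-2-\<epsilon>)"
    and \<pi>01: "\<And>n. 0 \<le> \<pi> n \<and> \<pi> n \<le> 1"
    and rec: "\<And>n. a < n \<Longrightarrow> \<pi> n = measure_pmf.expectation (Y n) \<pi>"
    and X: "0 < X" and K: "0 \<le> K"
    and Lip: "\<And>j m. X \<le> real j \<Longrightarrow> X \<le> real m \<Longrightarrow>
               \<bar>\<pi> j - \<pi> m\<bar> \<le> K * \<bar>real j - real m\<bar> / min (real j) (real m)"
  shows "\<exists>H N1. 0 \<le> H \<and> (\<forall>n m. N1 \<le> n \<longrightarrow> \<bar>real m - \<alpha> * real n\<bar> \<le> 2 \<longrightarrow>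
            \<bar>\<pi> n - \<pi> m\<bar> \<le> H * ln (real n) powr (-1-\<epsilon>))"
proof -
  define H where "H = 2 * K / \<alpha> * (D + 2) + T"
  have H0: "0 \<le> H" using K \<alpha> D T by (simp add: H_def)
  have e1: "eventually (\<lambda>n. D * ln (real n) powr (-1-\<epsilon>) \<le> \<alpha>/4) sequentially"
    apply (rule ev_tendsto_le) subgoal using \<epsilon> by real_asymp subgoal using \<alpha> by simp done
  have e2: "eventually (\<lambda>n. 2 * max X 4 / \<alpha> \<le> real n) sequentially" by (rule ev_real_ge)
  have e3: "eventually (\<lambda>n::nat. 1 / real n \<le> ln (real n) powr (-1-\<epsilon>)) sequentially"
    using \<epsilon> by real_asymp
  have e4: "eventually (\<lambda>n::nat. real n powr (-2-\<epsilon>) \<le> ln (real n) powr (-1-\<epsilon>)) sequentially"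
    using \<epsilon> by real_asymp
  have e5: "eventually (\<lambda>n. N + a + 1 \<le> n) sequentially" by (rule eventually_ge_at_top)
  have "eventually (\<lambda>n. D * ln (real n) powr (-1-\<epsilon>) \<le> \<alpha>/4 \<and> 2 * max X 4 / \<alpha> \<le> real n
     \<and> 1 / real n \<le> ln (real n) powr (-1-\<epsilon>) \<and> real n powr (-2-\<epsilon>) \<le> ln (real n) powr (-1-\<epsilon>)
     \<and> N + a + 1 \<le> n) sequentially"
    using e1 e2 e3 e4 e5 by (intro eventually_conj)
  then obtain N1 where N1: "\<And>n. N1 \<le> n \<Longrightarrow> D * ln (real n) powr (-1-\<epsilon>) \<le> \<alpha>/4 \<and> 2 * max X 4 / \<alpha> \<le> real n
     \<and> 1 / real n \<le> ln (real n) powr (-1-\<epsilon>) \<and> real n powr (-2-\<epsilon>) \<le> ln (real n) powr (-1-\<epsilon>)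
     \<and> N + a + 1 \<le> n"
    by (auto simp: eventually_at_top_linorder)
  have main: "\<bar>\<pi> n - \<pi> m\<bar> \<le> H * ln (real n) powr (-1-\<epsilon>)"
    if n: "N1 \<le> n" and m: "\<bar>real m - \<alpha> * real n\<bar> \<le> 2" for n m
  proof -
    note HH = N1[OF n]
    have nN: "N \<le> n" and na: "a < n" using HH by auto
    have an: "max X 4 \<le> \<alpha> * real n / 2" using HH \<alpha> by (simp add: field_simps)
    then have aX: "X \<le> \<alpha> * real n / 2" and a4: "4 \<le> \<alpha> * real n / 2" by auto
    have npos: "0 < real n" using na by simp
    define d where "d = \<bar>\<delta> n\<bar>"
    have dD: "d \<le> D * ln (real n) powr (-1-\<epsilon>)" using B1[OF nN] by (simp add: d_def)
    have d4: "d \<le> \<alpha>/4" using dD HH by linarith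
    have d0: "0 \<le> d" by (simp add: d_def)
    define Bad where "Bad = {j. \<bar>real j - \<alpha> * real n\<bar> > \<delta> n * real n}"
    define b where "b = K * (d * real n + 2) / (\<alpha> * real n / 2)"
    have b0: "0 \<le> b" using K d0 npos \<alpha> by (simp add: b_def)
    have mX: "\<alpha> * real n / 2 \<le> real m" using m a4 by linarith
    have pw: "\<bar>\<pi> j - \<pi> m\<bar> \<le> b + indicator Bad j" for j
    proof (cases "j \<in> Bad")
      case True
      then show ?thesis using \<pi>01[of j] \<pi>01[of m] b0 by auto
    next
      case False
      then have jd: "\<bar>real j - \<alpha> * real n\<bar> \<le> \<delta> n * real n" by (simp add: Bad_def)
      have "\<delta> n * real n \<le> d * real n" using npos by (intro mult_right_mono) (auto simp: d_def)
      then have jd': "\<bar>real j - \<alpha> * real n\<bar> \<le> d * real n" using jd by linarith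
      have "d * real n \<le> \<alpha> / 4 * real n" using d4 npos by (intro mult_right_mono) auto
      then have jX: "\<alpha> * real n / 2 \<le> real j" using jd' by (simp add: abs_le_iff)
      have mn: "\<alpha> * real n / 2 \<le> min (real j) (real m)" using jX mX by simp
      have jm: "\<bar>real j - real m\<bar> \<le> d * real n + 2" using jd' m by (simp add: abs_le_iff)
      have "\<bar>\<pi> j - \<pi> m\<bar> \<le> K * \<bar>real j - real m\<bar> / min (real j) (real m)"
        using Lip jX mX aX by (meson order_trans)
      also have "\<dots> \<le> K * (d * real n + 2) / (\<alpha> * real n / 2)"
      proof (rule frac_le)
        show "0 \<le> K * (d * real n + 2)" using K d0 npos by simp
        show "K * \<bar>real j - real m\<bar> \<le> K * (d * real n + 2)" using jm K by (intro mult_left_mono) auto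
        show "0 < \<alpha> * real n / 2" using \<alpha> npos by simp
        show "\<alpha> * real n / 2 \<le> min (real j) (real m)" by (rule mn)
      qed
      finally show ?thesis using False by (simp add: b_def)
    qed
    have int1: "integrable (measure_pmf (Y n)) \<pi>"
      by (rule measure_pmf.integrable_const_bound[where B=1]) (use \<pi>01 in auto)
    have bnd: "norm (\<pi> x - \<pi> m) \<le> 1" for x
    proof -
      have "\<pi> x - \<pi> m \<le> 1" "\<pi> m - \<pi> x \<le> 1" using \<pi>01[of x] \<pi>01[of m] by linarith+
      then show ?thesis by (simp add: abs_le_iff)
    qed
    have int2: "integrable (measure_pmf (Y n)) (\<lambda>j. \<pi> j - \<pi> m)"
      by (rule measure_pmf.integrable_const_bound[where B=1]) (use bnd in auto)
    have int3: "integrable (measure_pmf (Y n)) (\<lambda>j. b + indicator Bad j)"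
      by (rule measure_pmf.integrable_const_bound[where B="b + 1"]) (use b0 in \<open>auto simp: indicator_def\<close>)
    have "\<pi> n - \<pi> m = measure_pmf.expectation (Y n) (\<lambda>j. \<pi> j - \<pi> m)"
      using rec[OF na] int1 by (simp add: expc)
    then have "\<bar>\<pi> n - \<pi> m\<bar> \<le> measure_pmf.expectation (Y n) (\<lambda>j. norm (\<pi> j - \<pi> m))"
      using integral_norm_bound[of "measure_pmf (Y n)" "\<lambda>j. \<pi> j - \<pi> m"] by simp
    also have "\<dots> \<le> measure_pmf.expectation (Y n) (\<lambda>j. b + indicator Bad j)"
      using int2 int3 pw by (intro integral_mono) auto
    also have "\<dots> = b + measure_pmf.prob (Y n) Bad"
    proof -
      have ic: "integrable (measure_pmf (Y n)) (\<lambda>j. b)" by simp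
      have ii: "integrable (measure_pmf (Y n)) (indicator Bad :: nat \<Rightarrow> real)"
        by (rule measure_pmf.integrable_const_bound[where B=1]) (auto simp: indicator_def)
      have "measure_pmf.expectation (Y n) (\<lambda>j. b + indicator Bad j)
          = measure_pmf.expectation (Y n) (\<lambda>j. b) + measure_pmf.expectation (Y n) (indicator Bad)"
        by (rule Bochner_Integration.integral_add[OF ic ii])
      then show ?thesis by (simp add: expc)
    qed
    also have "\<dots> \<le> H * ln (real n) powr (-1-\<epsilon>)"
    proof -
      have "b = 2 * K / \<alpha> * (d + 2 / real n)" using npos \<alpha> by (simp add: b_def field_simps)
      also have "\<dots> \<le> 2 * K / \<alpha> * (D * ln (real n) powr (-1-\<epsilon>) + 2 * ln (real n) powr (-1-\<epsilon>))"
        using dD HH K \<alpha> by (intro mult_left_mono add_mono) auto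
      also have "\<dots> = 2 * K / \<alpha> * (D + 2) * ln (real n) powr (-1-\<epsilon>)" by (simp add: algebra_simps add_divide_distrib)
      finally have 1: "b \<le> 2 * K / \<alpha> * (D + 2) * ln (real n) powr (-1-\<epsilon>)" .
      have "measure_pmf.prob (Y n) Bad \<le> T * real n powr (-2-\<epsilon>)" using B3[OF nN] by (simp add: Bad_def)
      also have "\<dots> \<le> T * ln (real n) powr (-1-\<epsilon>)" using HH T by (intro mult_left_mono) auto
      finally have 2: "measure_pmf.prob (Y n) Bad \<le> T * ln (real n) powr (-1-\<epsilon>)" .
      show ?thesis using 1 2 by (simp add: H_def algebra_simps)
    qed
    finally show ?thesis .
  qed
  show ?thesis using H0 main by blast
qed




theorem theorem2p2:
  fixes Y :: "nat \<Rightarrow> nat pmf" and \<alpha> :: real and a :: nat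
  assumes "condition1 Y \<alpha>" and "a \<ge> 1"
  shows "\<forall>i\<in>{1..a}. \<exists>\<psi> :: real \<Rightarrow> real.
           continuous_on {0<..} \<psi> \<and>
           (\<forall>x>0. \<exists>r>0. \<exists>L. L-lipschitz_on (ball x r \<inter> {0<..}) \<psi>) \<and>
           (\<forall>t>0. \<psi> (\<alpha> * t) = \<psi> t) \<and>
           (\<lambda>n. le_end_prob Y a i n - \<psi> (real n)) \<longlonglongrightarrow> 0"
proof
  fix i assume i: "i \<in> {1..a}"
  have supp: "\<And>n. 1 \<le> n \<Longrightarrow> set_pmf (Y n) \<subseteq> {1..n}"
    and mono: "\<And>n k. 1 \<le> n \<Longrightarrow> 1 \<le> k \<Longrightarrow>
                 measure_pmf.prob (Y (n+1)) {..k} \<le> measure_pmf.prob (Y n) {..k}"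
    and \<alpha>: "0 < \<alpha>" "\<alpha> < 1"
    using assms(1) unfolding condition1_def by auto
  from assms(1) obtain \<epsilon> :: real and \<delta> :: "nat \<Rightarrow> real" where \<epsilon>: "\<epsilon> > 0"
    and O1: "\<delta> \<in> O(\<lambda>n. ln (real n) powr (-1 - \<epsilon>))"
    and O2: "(\<lambda>n. measure_pmf.expectation (Y (n+1)) real - measure_pmf.expectation (Y n) real - \<alpha>) \<in> O(\<delta>)"
    and O3: "(\<lambda>n. measure_pmf.prob (Y n) {j. \<bar>real j - \<alpha> * real n\<bar> > \<delta> n * real n})
           \<in> O(\<lambda>n. real n powr (-2 - \<epsilon>))"
    unfolding condition1_def by blast
  from O1 obtain D where D: "0 < D"
    and D': "eventually (\<lambda>n. norm (\<delta> n) \<le> D * norm (ln (real n) powr (-1 - \<epsilon>))) at_top"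
    by (elim landau_o.bigE)
  from O2 obtain C where C: "0 < C"
    and C': "eventually (\<lambda>n. norm (measure_pmf.expectation (Y (n+1)) real - measure_pmf.expectation (Y n) real - \<alpha>) \<le> C * norm (\<delta> n)) at_top"
    by (elim landau_o.bigE)
  from O3 obtain T where T: "0 < T"
    and T': "eventually (\<lambda>n. norm (measure_pmf.prob (Y n) {j. \<bar>real j - \<alpha> * real n\<bar> > \<delta> n * real n})
           \<le> T * norm (real n powr (-2 - \<epsilon>))) at_top"
    by (elim landau_o.bigE)
  from eventually_conj[OF D' eventually_conj[OF C' T']] obtain N where N: "\<And>n. N \<le> n \<Longrightarrow>
      norm (\<delta> n) \<le> D * norm (ln (real n) powr (-1 - \<epsilon>)) \<and>
      norm (measure_pmf.expectation (Y (n+1)) real - measure_pmf.expectation (Y n) real - \<alpha>) \<le> C * norm (\<delta> n) \<and>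
      norm (measure_pmf.prob (Y n) {j. \<bar>real j - \<alpha> * real n\<bar> > \<delta> n * real n})
           \<le> T * norm (real n powr (-2 - \<epsilon>))"
    by (auto simp: eventually_at_top_linorder)
  have B1: "\<And>n. N \<le> n \<Longrightarrow> \<bar>\<delta> n\<bar> \<le> D * ln (real n) powr (-1-\<epsilon>)"
    using N by (simp add: abs_of_nonneg)
  have B2: "\<And>n. N \<le> n \<Longrightarrow>
      \<bar>measure_pmf.expectation (Y (n+1)) real - measure_pmf.expectation (Y n) real - \<alpha>\<bar> \<le> C * \<bar>\<delta> n\<bar>"
    using N by simp
  have B3: "\<And>n. N \<le> n \<Longrightarrow>
      measure_pmf.prob (Y n) {j. \<bar>real j - \<alpha> * real n\<bar> > \<delta> n * real n} \<le> T * real n powr (-2-\<epsilon>)"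
    using N by (simp add: abs_of_nonneg)
  define \<pi> where "\<pi> = le_end_prob Y a i"
  have ia: "i \<le> a" using i by simp
  have \<pi>01: "\<And>n. 0 \<le> \<pi> n \<and> \<pi> n \<le> 1" using le_end_prob_bounds[OF ia] by (simp add: \<pi>_def)
  have rec: "\<And>n. a < n \<Longrightarrow> \<pi> n = measure_pmf.expectation (Y n) \<pi>"
    unfolding \<pi>_def using assms(2) by (intro le_end_prob_rec[OF ia] supp) auto
  obtain X M where X: "0 < X" and M: "0 \<le> M"
    and step: "\<And>l. X \<le> real l \<Longrightarrow> \<bar>\<pi> (Suc l) - \<pi> l\<bar> \<le> M / real l"
  proof -
    have "\<exists>X M. 0 < X \<and> 0 \<le> M \<and> (\<forall>l. X \<le> real l \<longrightarrow> \<bar>\<pi> (Suc l) - \<pi> l\<bar> \<le> M / real l)"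
      apply (rule lip_part[where C=C and D=D and T=T and N=N and a=a and \<delta>=\<delta> and Y=Y and \<alpha>=\<alpha> and \<epsilon>=\<epsilon>])
      using supp mono \<alpha> \<epsilon> C D T B1 B2 B3 \<pi>01 rec by auto
    then show ?thesis using that by blast
  qed
  have Lip: "\<And>j m. X \<le> real j \<Longrightarrow> X \<le> real m \<Longrightarrow>
      \<bar>\<pi> j - \<pi> m\<bar> \<le> M * \<bar>real j - real m\<bar> / min (real j) (real m)"
    by (rule lip_full[OF X step])
  obtain H N1 where H: "0 \<le> H" and S: "\<And>n m. N1 \<le> n \<Longrightarrow> \<bar>real m - \<alpha> * real n\<bar> \<le> 2 \<Longrightarrow>
      \<bar>\<pi> n - \<pi> m\<bar> \<le> H * ln (real n) powr (-1-\<epsilon>)"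
  proof -
    have "\<exists>H N1. 0 \<le> H \<and> (\<forall>n m. N1 \<le> n \<longrightarrow> \<bar>real m - \<alpha> * real n\<bar> \<le> 2 \<longrightarrow>
            \<bar>\<pi> n - \<pi> m\<bar> \<le> H * ln (real n) powr (-1-\<epsilon>))"
      apply (rule S_part[where D=D and T=T and N=N and a=a and \<delta>=\<delta> and Y=Y and \<alpha>=\<alpha> and \<epsilon>=\<epsilon> and X=X and K=M])
      using \<alpha> \<epsilon> D T B1 B3 \<pi>01 rec X M Lip by auto
    then show ?thesis using that by blast
  qed
  show "\<exists>\<psi> :: real \<Rightarrow> real.
           continuous_on {0<..} \<psi> \<and>
           (\<forall>x>0. \<exists>r>0. \<exists>L. L-lipschitz_on (ball x r \<inter> {0<..}) \<psi>) \<and>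
           (\<forall>t>0. \<psi> (\<alpha> * t) = \<psi> t) \<and>
           (\<lambda>n. le_end_prob Y a i n - \<psi> (real n)) \<longlonglongrightarrow> 0"
    using psi_exists[OF \<alpha> \<epsilon> M X H Lip S] by (simp add: \<pi>_def)
qed


end
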